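(* Let $d\ge 3$, $n\ge d+1$ and $2\le k\le d+1$. Then $\chi^{\mathsf{s}}_{d,k}(n)\ge \chi^{\mathsf{s}}_{d,d+1}(n)\ge \lfloor\sqrt{n-d+3}\rfloor+d-3$.
   Context: A $k$-uniform hypergraph $H=(V,E)$ consists of a finite set $V$ and $E\subseteq\binom{V}{k}$. A (linear) embedding of $H$ into $\mathbb{R}^d$ is a map $\phi:V(H)\to\mathbb{R}^d$ with $\dim\operatorname{aff}\phi(e)=k-1$ for every edge $e$ and $\operatorname{conv}\phi(e_1)\cap\operatorname{conv}\phi(e_2)=\operatorname{conv}\phi(e_1\cap e_2)$ for all edges $e_1,e_2$. $\mathcal{E}_{d,k}$ is the set of $k$-uniform hypergraphs admitting such an embedding into $\mathbb{R}^d$. A strong $c$-coloring of $H$ is a map $\kappa:V(H)\to\{1,\dots,c\}$ with $|\kappa(e)|=k$ for every edge $e$; $\chi^{\mathsf{s}}(H)$ is the least such $c$. $\chi^{\mathsf{s}}_{d,k}(n)=\max\{\chi^{\mathsf{s}}(H): H\in\mathcal{E}_{d,k},\ |V(H)|=n\}$. *)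

theory Defs
  imports "HOL-Analysis.Analysis"
begin

definition uniform_hypergraph :: "nat \<Rightarrow> nat set \<Rightarrow> nat set set \<Rightarrow> bool" where
  "uniform_hypergraph k V E \<longleftrightarrow> finite V \<and> (\<forall>e\<in>E. e \<subseteq> V \<and> card e = k)"

definition lin_embedding :: "(nat \<Rightarrow> 'a::euclidean_space) \<Rightarrow> nat \<Rightarrow> nat set set \<Rightarrow> bool" where
  "lin_embedding \<phi> k E \<longleftrightarrow>
     (\<forall>e\<in>E. aff_dim (\<phi> ` e) = int k - 1) \<and>
     (\<forall>e1\<in>E. \<forall>e2\<in>E. convex hull (\<phi> ` e1) \<inter> convex hull (\<phi> ` e2) = convex hull (\<phi> ` (e1 \<inter> e2)))"

definition strong_coloring :: "nat \<Rightarrow> nat set \<Rightarrow> nat set set \<Rightarrow> nat \<Rightarrow> (nat \<Rightarrow> nat) \<Rightarrow> bool" where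
  "strong_coloring k V E c \<kappa> \<longleftrightarrow> \<kappa> ` V \<subseteq> {1..c} \<and> (\<forall>e\<in>E. card (\<kappa> ` e) = k)"

definition strong_chromatic :: "nat \<Rightarrow> nat set \<Rightarrow> nat set set \<Rightarrow> nat" where
  "strong_chromatic k V E = (LEAST c. \<exists>\<kappa>. strong_coloring k V E c \<kappa>)"

text \<open>chi^s_{d,k}(n), where d = DIM('a).\<close>
definition chi_s_dk :: "'a::euclidean_space itself \<Rightarrow> nat \<Rightarrow> nat \<Rightarrow> nat" where
  "chi_s_dk _ k n = Max {strong_chromatic k V E | V E.
      uniform_hypergraph k V E \<and> card V = n \<and> (\<exists>\<phi>::nat \<Rightarrow> 'a. lin_embedding \<phi> k E)}"

end

theory Submission
  imports Defs "HOL-Computational_Algebra.Polynomial"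
begin

lemma simplex_hull_Int:
  fixes P :: "'a::euclidean_space set"
  assumes "\<not> affine_dependent P" "A \<subseteq> P" "B \<subseteq> P"
  shows "convex hull A \<inter> convex hull B = convex hull (A \<inter> B)"
proof
  show "convex hull (A \<inter> B) \<subseteq> convex hull A \<inter> convex hull B"
    by (simp add: hull_mono)
  have fA: "convex hull A face_of convex hull P"
    using face_of_convex_hull_affine_independent[OF assms(1)] assms(2) by blast
  have fB: "convex hull B face_of convex hull P"
    using face_of_convex_hull_affine_independent[OF assms(1)] assms(3) by blast
  have "(convex hull A \<inter> convex hull B) face_of convex hull P"
    using face_of_Int[OF fA fB] .
  then obtain c where c: "c \<subseteq> P" "convex hull A \<inter> convex hull B = convex hull c"
    using face_of_convex_hull_affine_independent[OF assms(1)] by blast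
  have "c \<subseteq> A \<inter> B"
  proof
    fix v assume v: "v \<in> c"
    then have vP: "v \<in> P" using c by auto
    have ext: "v extreme_point_of convex hull P"
      using extreme_point_of_convex_hull_affine_independent[OF assms(1)] vP by blast
    have vAB: "v \<in> convex hull A" "v \<in> convex hull B" using c v hull_inc[of v c] by auto
    have "v extreme_point_of convex hull A"
      using extreme_point_of_face[OF fA] ext vAB by blast
    moreover have "v extreme_point_of convex hull B"
      using extreme_point_of_face[OF fB] ext vAB by blast
    ultimately show "v \<in> A \<inter> B" using extreme_point_of_convex_hull by blast
  qed
  then show "convex hull A \<inter> convex hull B \<subseteq> convex hull (A \<inter> B)"
    using c by (simp add: hull_mono)
qed

lemma coloring_exists:
  assumes "uniform_hypergraph k V E"
  shows "\<exists>\<kappa>. strong_coloring k V E (card V) \<kappa>"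
proof -
  have fin: "finite V" using assms unfolding uniform_hypergraph_def by auto
  obtain f where f: "bij_betw f V {1..card V}"
    using fin by (metis bij_betw_iff_card card_atLeastAtMost diff_Suc_1 finite_atLeastAtMost)
  have "\<forall>e\<in>E. card (f ` e) = k"
  proof
    fix e assume "e \<in> E"
    then have "e \<subseteq> V" "card e = k" using assms unfolding uniform_hypergraph_def by auto
    then show "card (f ` e) = k"
      using f by (metis bij_betw_def card_image inj_on_subset)
  qed
  then show ?thesis unfolding strong_coloring_def using f
    by (metis bij_betw_imp_surj_on order_refl)
qed

lemma chi_le:
  assumes "uniform_hypergraph k V E"
  shows "strong_chromatic k V E \<le> card V"
proof -
  obtain \<kappa> where "strong_coloring k V E (card V) \<kappa>" using coloring_exists[OF assms] by blast
  then show ?thesis unfolding strong_chromatic_def by (metis (mono_tags) Least_le)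
qed

lemma chi_ge:
  assumes "uniform_hypergraph k V E"
    and "\<And>c \<kappa>. strong_coloring k V E c \<kappa> \<Longrightarrow> b \<le> c"
  shows "b \<le> strong_chromatic k V E"
proof -
  have "\<exists>c \<kappa>. strong_coloring k V E c \<kappa>" using coloring_exists[OF assms(1)] by blast
  then have "\<exists>\<kappa>. strong_coloring k V E (strong_chromatic k V E) \<kappa>"
    unfolding strong_chromatic_def by (rule LeastI_ex)
  then show ?thesis using assms(2) by blast
qed

definition chiset :: "'a::euclidean_space itself \<Rightarrow> nat \<Rightarrow> nat \<Rightarrow> nat set" where
  "chiset T k n = {strong_chromatic k V E | V E.
      uniform_hypergraph k V E \<and> card V = n \<and> (\<exists>\<phi>::nat \<Rightarrow> 'a. lin_embedding \<phi> k E)}"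

lemma chi_s_dk_chiset: "chi_s_dk T k n = Max (chiset T k n)"
  unfolding chi_s_dk_def chiset_def by simp

lemma chiset_finite: "finite (chiset T k n)"
proof -
  have "chiset T k n \<subseteq> {..n}" unfolding chiset_def using chi_le by fastforce
  then show ?thesis using finite_subset by blast
qed

lemma chiset_ge:
  assumes "uniform_hypergraph k V E" "card V = n" "lin_embedding (\<phi>::nat \<Rightarrow> 'a::euclidean_space) k E"
  shows "strong_chromatic k V E \<le> chi_s_dk TYPE('a) k n"
proof -
  have "strong_chromatic k V E \<in> chiset TYPE('a) k n" unfolding chiset_def using assms by blast
  then show ?thesis unfolding chi_s_dk_chiset using chiset_finite Max_ge by blast
qed

lemma chiset_ne: "chiset (T::'a::euclidean_space itself) k n \<noteq> {}"
proof -
  have "uniform_hypergraph k {0..<n} {}" unfolding uniform_hypergraph_def by simp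
  moreover have "lin_embedding (\<lambda>_. 0::'a) k {}" unfolding lin_embedding_def by simp
  ultimately have "strong_chromatic k {0..<n} {} \<in> chiset T k n" unfolding chiset_def by fastforce
  then show ?thesis by blast
qed

lemma emb_indep:
  assumes "lin_embedding (\<phi>::nat \<Rightarrow> 'a::euclidean_space) K E" "e \<in> E" "finite e" "card e = K"
  shows "\<not> affine_dependent (\<phi> ` e) \<and> inj_on \<phi> e"
proof -
  have ad: "aff_dim (\<phi> ` e) = int K - 1" using assms unfolding lin_embedding_def by auto
  have f: "finite (\<phi> ` e)" using assms by auto
  have c1: "card (\<phi> ` e) \<le> K" using card_image_le[OF assms(3)] assms(4) by simp
  have "aff_dim (\<phi> ` e) \<le> int (card (\<phi> ` e)) - 1" using aff_dim_le_card[OF f] by simp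
  then have c: "card (\<phi> ` e) = K" using ad c1 by linarith
  then have "inj_on \<phi> e" using assms(3,4) by (simp add: eq_card_imp_inj_on)
  moreover have "\<not> affine_dependent (\<phi> ` e)" using affine_independent_iff_card[of "\<phi> ` e"] f ad c by simp
  ultimately show ?thesis by simp
qed

lemma part1:
  assumes "2 \<le> k" "k \<le> K"
  shows "chi_s_dk TYPE('a::euclidean_space) K n \<le> chi_s_dk TYPE('a) k n"
proof -
  have ne: "chiset TYPE('a) K n \<noteq> {} \<Longrightarrow> ?thesis"
  proof -
    assume "chiset TYPE('a) K n \<noteq> {}"
    then have "chi_s_dk TYPE('a) K n \<in> chiset TYPE('a) K n"
      unfolding chi_s_dk_chiset using chiset_finite Max_in by blast
    then obtain V E and \<phi> :: "nat \<Rightarrow> 'a" where H: "uniform_hypergraph K V E" "card V = n"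
      "lin_embedding \<phi> K E" "chi_s_dk TYPE('a) K n = strong_chromatic K V E"
      unfolding chiset_def by auto
    define E' where "E' = {f. \<exists>e\<in>E. f \<subseteq> e \<and> card f = k}"
    have eprop: "e \<subseteq> V \<and> finite e \<and> card e = K" if "e \<in> E" for e
      using H(1) that unfolding uniform_hypergraph_def by (auto intro: finite_subset)
    have U: "uniform_hypergraph k V E'"
      using H(1) unfolding uniform_hypergraph_def E'_def by auto
    have ind: "\<not> affine_dependent (\<phi> ` e) \<and> inj_on \<phi> e" if "e \<in> E" for e
      using emb_indep[OF H(3) that] eprop[OF that] by auto
    have L: "lin_embedding \<phi> k E'"
      unfolding lin_embedding_def
    proof (intro conjI ballI)
      fix f assume "f \<in> E'"
      then obtain e where e: "e \<in> E" "f \<subseteq> e" "card f = k" unfolding E'_def by auto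
      have "\<not> affine_dependent (\<phi> ` f)"
        using ind[OF e(1)] e(2) affine_dependent_subset image_mono by metis
      moreover have "card (\<phi> ` f) = k"
        using ind[OF e(1)] e(2,3) by (metis card_image inj_on_subset)
      ultimately show "aff_dim (\<phi> ` f) = int k - 1"
        using affine_independent_iff_card by auto
    next
      fix f1 f2 assume "f1 \<in> E'" "f2 \<in> E'"
      then obtain e1 e2 where e: "e1 \<in> E" "f1 \<subseteq> e1" "e2 \<in> E" "f2 \<subseteq> e2"
        unfolding E'_def by auto
      show "convex hull \<phi> ` f1 \<inter> convex hull \<phi> ` f2 = convex hull \<phi> ` (f1 \<inter> f2)"
      proof
        show "convex hull \<phi> ` (f1 \<inter> f2) \<subseteq> convex hull \<phi> ` f1 \<inter> convex hull \<phi> ` f2"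
          by (simp add: hull_mono image_mono)
        have eq: "convex hull \<phi> ` e1 \<inter> convex hull \<phi> ` e2 = convex hull \<phi> ` (e1 \<inter> e2)"
          using H(3) e unfolding lin_embedding_def by auto
        show "convex hull \<phi> ` f1 \<inter> convex hull \<phi> ` f2 \<subseteq> convex hull \<phi> ` (f1 \<inter> f2)"
        proof
          fix x assume x: "x \<in> convex hull \<phi> ` f1 \<inter> convex hull \<phi> ` f2"
          then have "x \<in> convex hull \<phi> ` e1 \<inter> convex hull \<phi> ` e2"
            using e by (meson IntD1 IntD2 IntI hull_mono image_mono subsetD)
          then have x1: "x \<in> convex hull \<phi> ` (e1 \<inter> e2)" using eq by simp
          have "x \<in> convex hull (\<phi> ` f1 \<inter> \<phi> ` (e1 \<inter> e2))"
            using simplex_hull_Int[OF conjunct1[OF ind[OF e(1)]], of "\<phi> ` f1" "\<phi> ` (e1 \<inter> e2)"] x x1 e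
            by blast
          moreover have "\<phi> ` f1 \<inter> \<phi> ` (e1 \<inter> e2) = \<phi> ` (f1 \<inter> e2)"
            using conjunct2[OF ind[OF e(1)]] e(2) by (auto simp: inj_on_def)
          ultimately have x2: "x \<in> convex hull \<phi> ` (f1 \<inter> e2)" by simp
          have "x \<in> convex hull (\<phi> ` (f1 \<inter> e2) \<inter> \<phi> ` f2)"
            using simplex_hull_Int[OF conjunct1[OF ind[OF e(3)]], of "\<phi> ` (f1 \<inter> e2)" "\<phi> ` f2"] x x2 e
            by blast
          moreover have "\<phi> ` (f1 \<inter> e2) \<inter> \<phi> ` f2 = \<phi> ` (f1 \<inter> f2)"
            using conjunct2[OF ind[OF e(3)]] e(4) by (auto simp: inj_on_def)
          ultimately show "x \<in> convex hull \<phi> ` (f1 \<inter> f2)" by simp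
        qed
      qed
    qed
    have "strong_chromatic K V E \<le> strong_chromatic k V E'"
    proof (rule chi_ge[OF U])
      fix c \<kappa> assume sc: "strong_coloring k V E' c \<kappa>"
      have "strong_coloring K V E c \<kappa>"
        unfolding strong_coloring_def
      proof (intro conjI ballI)
        show "\<kappa> ` V \<subseteq> {1..c}" using sc unfolding strong_coloring_def by auto
        fix e assume e: "e \<in> E"
        have "inj_on \<kappa> e"
        proof (rule inj_onI, rule ccontr)
          fix x y assume xy: "x \<in> e" "y \<in> e" "\<kappa> x = \<kappa> y" "x \<noteq> y"
          have "card {x, y} \<le> k" "{x,y} \<subseteq> e" "k \<le> card e" using xy assms eprop[OF e] by auto
          then obtain f where f: "{x,y} \<subseteq> f" "f \<subseteq> e" "card f = k"
            using eprop[OF e] by (meson obtain_subset_with_card_n exists_subset_between)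
          then have "f \<in> E'" unfolding E'_def using e by auto
          then have cf: "card (\<kappa> ` f) = card f" using sc f unfolding strong_coloring_def by auto
          have "finite f" using f eprop[OF e] finite_subset by blast
          then have "inj_on \<kappa> f" using cf eq_card_imp_inj_on by blast
          then show False using xy f by (auto simp: inj_on_def)
        qed
        then show "card (\<kappa> ` e) = K" using eprop[OF e] card_image by metis
      qed
      then show "strong_chromatic K V E \<le> c"
        unfolding strong_chromatic_def by (metis (mono_tags) Least_le)
    qed
    also have "\<dots> \<le> chi_s_dk TYPE('a) k n" using chiset_ge[OF U H(2) L] .
    finally show ?thesis using H(4) by simp
  qed
  show ?thesis using ne chiset_ne by blast
qed

definition gam :: "(nat \<Rightarrow> 'a::euclidean_space) \<Rightarrow> real \<Rightarrow> 'a" where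
  "gam \<beta> t = (\<Sum>i<DIM('a). t^(Suc i) *\<^sub>R \<beta> i)"

lemma poly_functional:
  fixes \<beta> :: "nat \<Rightarrow> 'a::euclidean_space"
  assumes b: "bij_betw \<beta> {..<DIM('a)} Basis" and dq: "degree q \<le> DIM('a)"
  shows "poly q t = coeff q 0 + inner (\<Sum>i<DIM('a). coeff q (Suc i) *\<^sub>R \<beta> i) (gam \<beta> t)"
proof -
  let ?d = "DIM('a)"
  have ib: "inner (\<beta> i) (\<beta> j) = (if i = j then 1 else 0)" if "i < ?d" "j < ?d" for i j
  proof -
    have "\<beta> i \<in> Basis" "\<beta> j \<in> Basis" using b that by (auto simp: bij_betw_def)
    moreover have "\<beta> i = \<beta> j \<longleftrightarrow> i = j" using b that by (auto simp: bij_betw_def inj_on_def)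
    ultimately show ?thesis by (simp add: inner_Basis)
  qed
  have bi: "inner (\<beta> i) (gam \<beta> t) = t^(Suc i)" if "i < ?d" for i
  proof -
    have "inner (\<beta> i) (gam \<beta> t) = (\<Sum>j<?d. t^(Suc j) * inner (\<beta> i) (\<beta> j))"
      unfolding gam_def by (simp add: inner_sum_right)
    also have "\<dots> = (\<Sum>j<?d. if j = i then t^(Suc j) else 0)"
      by (rule sum.cong[OF refl]) (use that ib in auto)
    also have "\<dots> = t^(Suc i)" using that by (simp add: sum.delta)
    finally show ?thesis .
  qed
  have "inner (\<Sum>i<?d. coeff q (Suc i) *\<^sub>R \<beta> i) (gam \<beta> t)
      = (\<Sum>i<?d. coeff q (Suc i) * inner (\<beta> i) (gam \<beta> t))"
    by (simp add: inner_sum_left)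
  also have "\<dots> = (\<Sum>i<?d. coeff q (Suc i) * t^(Suc i))"
    by (rule sum.cong[OF refl]) (simp add: bi)
  finally have 1: "inner (\<Sum>i<?d. coeff q (Suc i) *\<^sub>R \<beta> i) (gam \<beta> t) = (\<Sum>i<?d. coeff q (Suc i) * t^(Suc i))" .
  have "poly q t = (\<Sum>i\<le>?d. coeff q i * t ^ i)"
  proof -
    have "poly q t = (\<Sum>i\<le>degree q. coeff q i * t ^ i)" by (rule poly_altdef)
    also have "\<dots> = (\<Sum>i\<le>?d. coeff q i * t ^ i)"
      by (rule sum.mono_neutral_left) (use dq le_degree in force)+
    finally show ?thesis .
  qed
  also have "\<dots> = coeff q 0 + (\<Sum>i<?d. coeff q (Suc i) * t^(Suc i))"
    by (subst lessThan_Suc_atMost[symmetric], subst sum.lessThan_Suc_shift) simp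
  finally show ?thesis using 1 by simp
qed

lemma prod_functional:
  fixes \<beta> :: "nat \<Rightarrow> 'a::euclidean_space"
  assumes b: "bij_betw \<beta> {..<DIM('a)} Basis" and R: "finite R" "card R \<le> DIM('a)"
  shows "\<exists>c w. \<forall>t. \<epsilon> * (\<Prod>r\<in>R. (t - r)) = c + inner w (gam \<beta> t)"
proof -
  define q where "q = smult \<epsilon> (\<Prod>r\<in>R. [:-r, 1:])"
  have "degree q \<le> card R"
  proof -
    have "degree q \<le> degree (\<Prod>r\<in>R. [:-r, 1:])" unfolding q_def by (rule degree_smult_le)
    also have "\<dots> \<le> sum (degree \<circ> (\<lambda>r. [:-r, 1:])) R" by (rule degree_prod_sum_le[OF R(1)])
    also have "\<dots> = card R" by simp
    finally show ?thesis .
  qed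
  then have dq: "degree q \<le> DIM('a)" using R by simp
  have "\<forall>t. \<epsilon> * (\<Prod>r\<in>R. (t - r)) = poly q t" unfolding q_def by (simp add: poly_prod)
  then show ?thesis using poly_functional[OF b dq] by metis
qed

lemma sep_face:
  fixes S T :: "'a::euclidean_space set"
  assumes S: "finite S" and T: "finite T"
    and gS: "\<And>s. s \<in> S \<Longrightarrow> c + inner w s \<le> 0"
    and gT: "\<And>s. s \<in> T \<Longrightarrow> c + inner w s \<ge> 0"
  shows "convex hull S \<inter> convex hull T \<subseteq> convex hull {s\<in>S. c + inner w s = 0}"
proof
  fix x assume x: "x \<in> convex hull S \<inter> convex hull T"
  obtain u where u: "\<forall>s\<in>S. 0 \<le> u s" "sum u S = 1" "(\<Sum>s\<in>S. u s *\<^sub>R s) = x"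
    using x convex_hull_finite[OF S] by auto
  obtain v where v: "\<forall>s\<in>T. 0 \<le> v s" "sum v T = 1" "(\<Sum>s\<in>T. v s *\<^sub>R s) = x"
    using x convex_hull_finite[OF T] by auto
  have eqS: "c + inner w x = (\<Sum>s\<in>S. u s * (c + inner w s))"
  proof -
    have "inner w x = (\<Sum>s\<in>S. u s * inner w s)" using u(3) by (auto simp: inner_sum_right)
    moreover have "c = (\<Sum>s\<in>S. u s * c)" using u(2) by (simp add: sum_distrib_right[symmetric])
    ultimately show ?thesis by (simp add: distrib_left sum.distrib)
  qed
  have eqT: "c + inner w x = (\<Sum>s\<in>T. v s * (c + inner w s))"
  proof -
    have "inner w x = (\<Sum>s\<in>T. v s * inner w s)" using v(3) by (auto simp: inner_sum_right)
    moreover have "c = (\<Sum>s\<in>T. v s * c)" using v(2) by (simp add: sum_distrib_right[symmetric])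
    ultimately show ?thesis by (simp add: distrib_left sum.distrib)
  qed
  have "(\<Sum>s\<in>S. u s * (c + inner w s)) \<le> 0"
    using u gS by (intro sum_nonpos) (simp add: mult_nonneg_nonpos)
  moreover have "(\<Sum>s\<in>T. v s * (c + inner w s)) \<ge> 0"
    using v gT by (intro sum_nonneg) simp
  ultimately have z: "(\<Sum>s\<in>S. - (u s * (c + inner w s))) = 0"
    using eqS eqT by (simp add: sum_negf)
  have z2: "\<forall>s\<in>S. u s * (c + inner w s) = 0"
    using sum_nonneg_eq_0_iff[OF S, of "\<lambda>s. - (u s * (c + inner w s))"] z u gS
    by (simp add: mult_nonneg_nonpos)
  let ?Z = "{s\<in>S. c + inner w s = 0}"
  have fZ: "finite ?Z" using S by simp
  have u0: "u s = 0" if "s \<in> S - ?Z" for s using z2 that by auto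
  have "sum u ?Z = 1"
    using u(2) sum.mono_neutral_left[OF S, of ?Z u] u0 by auto
  moreover have "(\<Sum>s\<in>?Z. u s *\<^sub>R s) = x"
    using u(3) sum.mono_neutral_left[OF S, of ?Z "\<lambda>s. u s *\<^sub>R s"] u0 by auto
  ultimately show "x \<in> convex hull ?Z"
    unfolding convex_hull_finite[OF fZ] using u(1) by auto
qed

lemma gam_coord:
  fixes \<beta> :: "nat \<Rightarrow> 'a::euclidean_space"
  assumes b: "bij_betw \<beta> {..<DIM('a)} Basis" and i: "i < DIM('a)"
  shows "inner (\<beta> i) (gam \<beta> t) = t^(Suc i)"
proof -
  let ?d = "DIM('a)"
  have ib: "inner (\<beta> i) (\<beta> j) = (if i = j then 1 else 0)" if "j < ?d" for j
  proof -
    have "\<beta> i \<in> Basis" "\<beta> j \<in> Basis" using b that i by (auto simp: bij_betw_def)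
    moreover have "\<beta> i = \<beta> j \<longleftrightarrow> i = j" using b that i by (auto simp: bij_betw_def inj_on_def)
    ultimately show ?thesis by (simp add: inner_Basis)
  qed
  have "inner (\<beta> i) (gam \<beta> t) = (\<Sum>j<?d. t^(Suc j) * inner (\<beta> i) (\<beta> j))"
    unfolding gam_def by (simp add: inner_sum_right)
  also have "\<dots> = (\<Sum>j<?d. if j = i then t^(Suc j) else 0)"
    by (rule sum.cong[OF refl]) (use ib in auto)
  also have "\<dots> = t^(Suc i)" using i by (simp add: sum.delta)
  finally show ?thesis .
qed

lemma gam_inj:
  fixes \<beta> :: "nat \<Rightarrow> 'a::euclidean_space"
  assumes b: "bij_betw \<beta> {..<DIM('a)} Basis"
  shows "inj (gam \<beta>)"
proof (rule injI)
  fix x y assume "gam \<beta> x = gam \<beta> y"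
  then have "inner (\<beta> 0) (gam \<beta> x) = inner (\<beta> 0) (gam \<beta> y)" by simp
  then show "x = y" using gam_coord[OF b, of 0] by simp
qed

lemma gam_indep:
  fixes \<beta> :: "nat \<Rightarrow> 'a::euclidean_space"
  assumes b: "bij_betw \<beta> {..<DIM('a)} Basis" and X: "finite X" "card X \<le> Suc DIM('a)"
  shows "\<not> affine_dependent (gam \<beta> ` X)"
proof
  assume "affine_dependent (gam \<beta> ` X)"
  then obtain U where U: "sum U (gam \<beta> ` X) = 0" "\<exists>v\<in>gam \<beta> ` X. U v \<noteq> 0"
    "(\<Sum>v\<in>gam \<beta> ` X. U v *\<^sub>R v) = 0"
    using affine_dependent_explicit_finite[of "gam \<beta> ` X"] X by auto
  then obtain s0 where s0: "s0 \<in> X" "U (gam \<beta> s0) \<noteq> 0" by auto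
  have inj: "inj_on (gam \<beta>) X" using gam_inj[OF b] by (simp add: inj_on_def inj_def)
  let ?R = "X - {s0}"
  have "card ?R \<le> DIM('a)" using X s0 by (simp add: card_Diff_singleton)
  then obtain c w where cw: "\<forall>t. 1 * (\<Prod>r\<in>?R. (t - r)) = c + inner w (gam \<beta> t)"
    using prod_functional[OF b, of ?R 1] X by auto
  have "(\<Sum>v\<in>gam \<beta> ` X. U v * (c + inner w v)) = c * sum U (gam \<beta> ` X) + inner w (\<Sum>v\<in>gam \<beta> ` X. U v *\<^sub>R v)"
    by (simp add: inner_sum_right sum_distrib_left distrib_left sum.distrib algebra_simps)
  also have "\<dots> = 0" using U by simp
  finally have "(\<Sum>s\<in>X. U (gam \<beta> s) * (\<Prod>r\<in>?R. (s - r))) = 0"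
    using cw by (simp add: sum.reindex[OF inj])
  moreover have "(\<Sum>s\<in>X. U (gam \<beta> s) * (\<Prod>r\<in>?R. (s - r))) = U (gam \<beta> s0) * (\<Prod>r\<in>?R. (s0 - r))"
  proof -
    have "(\<Sum>s\<in>X - {s0}. U (gam \<beta> s) * (\<Prod>r\<in>?R. (s - r))) = 0"
    proof (rule sum.neutral, rule ballI)
      fix s assume s: "s \<in> X - {s0}"
      have "(\<Prod>r\<in>?R. (s - r)) = 0" using X(1) s by (simp add: prod_zero_iff)
      then show "U (gam \<beta> s) * (\<Prod>r\<in>?R. (s - r)) = 0" by simp
    qed
    then show ?thesis using sum.remove[OF X(1) s0(1), of "\<lambda>s. U (gam \<beta> s) * (\<Prod>r\<in>?R. (s - r))"] by simp
  qed
  moreover have "(\<Prod>r\<in>?R. (s0 - r)) \<noteq> 0" using X by auto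
  ultimately show False using s0 by simp
qed

lemma prodl_functional:
  fixes \<beta> :: "nat \<Rightarrow> 'a::euclidean_space"
  assumes b: "bij_betw \<beta> {..<DIM('a)} Basis" and R: "length R \<le> DIM('a)"
  shows "\<exists>c w. \<forall>t. \<epsilon> * prod_list (map (\<lambda>r. t - r) R) = c + inner w (gam \<beta> t)"
proof -
  define q where "q = smult \<epsilon> (prod_list (map (\<lambda>r. [:-r, 1:]) R))"
  have "degree q \<le> length R"
  proof -
    have "degree q \<le> degree (prod_list (map (\<lambda>r. [:-r, 1:]) R))" unfolding q_def by (rule degree_smult_le)
    also have "\<dots> \<le> sum_list (map degree (map (\<lambda>r. [:-r, 1:]) R))" by (rule degree_prod_list_le)
    also have "\<dots> = length R" by (induction R) auto
    finally show ?thesis .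
  qed
  then have dq: "degree q \<le> DIM('a)" using R by simp
  have pp: "poly (prod_list (map (\<lambda>r. [:-r, 1:]) R)) t = prod_list (map (\<lambda>r. t - r) R)" for t
    by (induction R) (auto simp: algebra_simps)
  have "\<forall>t. \<epsilon> * prod_list (map (\<lambda>r. t - r) R) = poly q t"
    unfolding q_def by (simp add: pp)
  then show ?thesis using poly_functional[OF b dq] by metis
qed

lemma pair_sep:
  fixes \<beta> :: "nat \<Rightarrow> 'a::euclidean_space"
  assumes b: "bij_betw \<beta> {..<DIM('a)} Basis" and R: "length R \<le> DIM('a)"
    and e: "finite e1" "finite e2"
    and h1: "\<And>v. v \<in> e1 \<Longrightarrow> \<epsilon> * prod_list (map (\<lambda>r. \<tau> v - r) R) \<le> 0"
    and h2: "\<And>v. v \<in> e2 \<Longrightarrow> \<epsilon> * prod_list (map (\<lambda>r. \<tau> v - r) R) \<ge> 0"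
    and h3: "\<And>v. v \<in> e1 \<Longrightarrow> \<epsilon> * prod_list (map (\<lambda>r. \<tau> v - r) R) = 0 \<Longrightarrow> v \<in> e2"
  shows "convex hull ((\<lambda>v. gam \<beta> (\<tau> v)) ` e1) \<inter> convex hull ((\<lambda>v. gam \<beta> (\<tau> v)) ` e2)
       = convex hull ((\<lambda>v. gam \<beta> (\<tau> v)) ` (e1 \<inter> e2))"
proof
  show "convex hull ((\<lambda>v. gam \<beta> (\<tau> v)) ` (e1 \<inter> e2)) \<subseteq> convex hull ((\<lambda>v. gam \<beta> (\<tau> v)) ` e1) \<inter> convex hull ((\<lambda>v. gam \<beta> (\<tau> v)) ` e2)"
    by (simp add: hull_mono image_mono)
  obtain c w where cw: "\<forall>t. \<epsilon> * prod_list (map (\<lambda>r. t - r) R) = c + inner w (gam \<beta> t)"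
    using prodl_functional[OF b R] by blast
  let ?\<phi> = "\<lambda>v. gam \<beta> (\<tau> v)"
  have "convex hull (?\<phi> ` e1) \<inter> convex hull (?\<phi> ` e2) \<subseteq> convex hull {s\<in>?\<phi> ` e1. c + inner w s = 0}"
  proof (rule sep_face)
    show "finite (?\<phi> ` e1)" "finite (?\<phi> ` e2)" using e by auto
    fix s assume "s \<in> ?\<phi> ` e1"
    then obtain v where "v \<in> e1" "s = ?\<phi> v" by auto
    then show "c + inner w s \<le> 0" using h1[of v] cw by metis
  next
    fix s assume "s \<in> ?\<phi> ` e2"
    then obtain v where "v \<in> e2" "s = ?\<phi> v" by auto
    then show "c + inner w s \<ge> 0" using h2[of v] cw by metis
  qed
  also have "\<dots> \<subseteq> convex hull (?\<phi> ` (e1 \<inter> e2))"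
  proof (rule hull_mono, rule subsetI)
    fix s assume "s \<in> {s\<in>?\<phi> ` e1. c + inner w s = 0}"
    then obtain v where v: "v \<in> e1" "s = ?\<phi> v" "c + inner w (?\<phi> v) = 0" by auto
    then have "v \<in> e2" using h3 cw by metis
    then show "s \<in> ?\<phi> ` (e1 \<inter> e2)" using v by auto
  qed
  finally show "convex hull (?\<phi> ` e1) \<inter> convex hull (?\<phi> ` e2) \<subseteq> convex hull (?\<phi> ` (e1 \<inter> e2))" .
qed

definition Pos :: "nat \<Rightarrow> nat \<Rightarrow> nat \<Rightarrow> nat" where
  "Pos m x y = (if x = y then m*x+m else if x < y then m*x + y else m*x + x - y)"

definition PS :: "nat \<Rightarrow> nat \<Rightarrow> (nat \<times> nat) set" where
  "PS i j = {(i,i),(j,j),(i,j),(j,i)}"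

definition Fv :: "real list \<Rightarrow> real \<Rightarrow> real \<Rightarrow> real" where
  "Fv R \<epsilon> t = \<epsilon> * prod_list (map (\<lambda>r. t - r) R)"

definition sepP :: "nat \<Rightarrow> nat \<times> nat \<Rightarrow> nat \<times> nat \<Rightarrow> bool" where
  "sepP m e f \<longleftrightarrow> (\<exists>\<epsilon> R. length R \<le> 3 \<and> (\<forall>r\<in>set R. r < real (m*m) + 1) \<and>
     (\<forall>(x,y)\<in>PS (fst e) (snd e). Fv R \<epsilon> (real (Pos m x y)) \<le> 0) \<and>
     (\<forall>(x,y)\<in>PS (fst f) (snd f). Fv R \<epsilon> (real (Pos m x y)) \<ge> 0) \<and>
     (\<forall>(x,y)\<in>PS (fst e) (snd e) \<union> PS (fst f) (snd f). Fv R \<epsilon> (real (Pos m x y)) = 0 \<longrightarrow>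
         (x,y) \<in> PS (fst e) (snd e) \<inter> PS (fst f) (snd f)))"

lemma sepP_sym: "sepP m e f \<Longrightarrow> sepP m f e"
  unfolding sepP_def
  apply (elim exE conjE)
  subgoal for \<epsilon> R
    apply (rule exI[of _ "-\<epsilon>"], rule exI[of _ R])
    by (auto simp: Fv_def)
  done

lemma PS_swap: "PS i j = PS j i" unfolding PS_def by auto

lemma sepP_swap1: "sepP m (i,j) f \<longleftrightarrow> sepP m (j,i) f"
  unfolding sepP_def by (simp add: PS_swap[of i j])
lemma sepP_swap2: "sepP m e (i,j) \<longleftrightarrow> sepP m e (j,i)"
  unfolding sepP_def by (simp add: PS_swap[of i j])

lemma Pos_bounds: "x < m \<Longrightarrow> y < m \<Longrightarrow> m*x + 1 \<le> Pos m x y \<and> Pos m x y \<le> m*x + m"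
  unfolding Pos_def by auto

lemma cl_mono: "(c::nat) < c' \<Longrightarrow> m*c + m \<le> m*c'"
proof -
  assume "c < c'" then have "Suc c \<le> c'" by simp
  then have "m * Suc c \<le> m * c'" by (rule mult_le_mono2)
  then show ?thesis by simp
qed

definition hr :: "nat \<Rightarrow> real" where "hr N = real N + 1/2"

definition er :: "nat \<Rightarrow> real" where "er N = real N"

lemma hr_lt_iff: "(real p < hr N) = (p \<le> N)"
proof
  assume "real p < hr N"
  then show "p \<le> N"
  proof (rule contrapos_pp)
    assume "\<not> p \<le> N" then have "real N + 1 \<le> real p" by linarith
    then show "\<not> real p < hr N" unfolding hr_def by linarith
  qed
qed (simp add: hr_def)

lemma hr_simps:
  "(real p < hr N) = (p \<le> N)" "(real p \<le> hr N) = (p \<le> N)"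
  "(hr N < real p) = (N < p)" "(hr N \<le> real p) = (N < p)"
  "(real p = hr N) = False" "(hr N = real p) = False"
  "(real p < er N) = (p < N)" "(real p \<le> er N) = (p \<le> N)"
  "(er N < real p) = (N < p)" "(er N \<le> real p) = (N \<le> p)"
  "(real p = er N) = (p = N)" "(er N = real p) = (N = p)"
  using hr_lt_iff[of p N]
  unfolding er_def by (auto simp: hr_def)

lemma hr_bnd: "(hr N < real m * real m + 1) = (N \<le> m*m)" "(er N < real m * real m + 1) = (N \<le> m*m)"
proof -
  have r: "real m * real m = real (m*m)" by simp
  have "(real N < real (m*m) + 1) = (N \<le> m*m)" by linarith
  moreover have "(real N + 1/2 < real (m*m) + 1) = (N \<le> m*m)" by linarith
  ultimately show "(hr N < real m * real m + 1) = (N \<le> m*m)" "(er N < real m * real m + 1) = (N \<le> m*m)"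
    unfolding r hr_def er_def by auto
qed

lemma Fv_simps: "Fv [] e t = e" "Fv (r#R) e t = Fv R e t * (t - r)"
  unfolding Fv_def by (auto simp: algebra_simps)

lemma sep_disj1:
  assumes "i < j" "j < k" "k < l" "l < m"
  shows "sepP m (i,j) (k,l)"
proof -
  let ?R = "[hr (m*j+m)]"
  have b: "\<And>x y. x < m \<Longrightarrow> y < m \<Longrightarrow> m*x + 1 \<le> Pos m x y \<and> Pos m x y \<le> m*x + m" by (rule Pos_bounds)
  have c1: "m*i+m \<le> m*j" "m*j+m \<le> m*k" "m*k+m \<le> m*l" using assms cl_mono by auto
  have c2: "m*j+m \<le> m*m" using assms cl_mono by auto
  show ?thesis unfolding sepP_def
    apply (rule exI[of _ 1], rule exI[of _ ?R])
    using assms c1 c2 b[of i i] b[of i j] b[of j i] b[of j j] b[of k k] b[of k l] b[of l k] b[of l l]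
    apply (auto simp: PS_def Fv_simps hr_simps hr_bnd mult_le_0_iff zero_le_mult_iff)
    done
qed

lemma sep_disj2:
  assumes "i < k" "k < j" "j < l" "l < m"
  shows "sepP m (i,j) (k,l)"
proof -
  have b: "\<And>x y. x < m \<Longrightarrow> y < m \<Longrightarrow> m*x + 1 \<le> Pos m x y \<and> Pos m x y \<le> m*x + m" by (rule Pos_bounds)
  have c: "m*i+m \<le> m*k" "m*i+m \<le> m*j" "m*i+m \<le> m*l" "m*k+m \<le> m*j" "m*k+m \<le> m*l" "m*j+m \<le> m*l" "m*l+m \<le> m*m" using assms cl_mono by auto
  show ?thesis unfolding sepP_def
    apply (rule exI[of _ "1"], rule exI[of _ "[hr (m*i+m), hr (m*k+m), hr (m*j+m)]"])
    using assms c b[of i i] b[of i j] b[of j i] b[of j j] b[of k k] b[of k l] b[of l k] b[of l l]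
    apply (auto simp: PS_def Fv_simps hr_simps hr_bnd mult_le_0_iff zero_le_mult_iff Pos_def)
    done
qed

lemma sep_disj3:
  assumes "i < k" "k < l" "l < j" "j < m"
  shows "sepP m (i,j) (k,l)"
proof -
  have b: "\<And>x y. x < m \<Longrightarrow> y < m \<Longrightarrow> m*x + 1 \<le> Pos m x y \<and> Pos m x y \<le> m*x + m" by (rule Pos_bounds)
  have c: "m*i+m \<le> m*k" "m*i+m \<le> m*l" "m*i+m \<le> m*j" "m*k+m \<le> m*l" "m*k+m \<le> m*j" "m*l+m \<le> m*j" "m*j+m \<le> m*m" using assms cl_mono by auto
  show ?thesis unfolding sepP_def
    apply (rule exI[of _ "-1"], rule exI[of _ "[hr (m*i+m), hr (m*l+m)]"])
    using assms c b[of i i] b[of i j] b[of j i] b[of j j] b[of k k] b[of k l] b[of l k] b[of l l]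
    apply (auto simp: PS_def Fv_simps hr_simps hr_bnd mult_le_0_iff zero_le_mult_iff Pos_def)
    done
qed

lemma sep_sh1:
  assumes "i < j" "j < k" "k < m"
  shows "sepP m (i,j) (i,k)"
proof -
  have b: "\<And>x y. x < m \<Longrightarrow> y < m \<Longrightarrow> m*x + 1 \<le> Pos m x y \<and> Pos m x y \<le> m*x + m" by (rule Pos_bounds)
  have c: "m*i+m \<le> m*j" "m*i+m \<le> m*k" "m*j+m \<le> m*k" "m*k+m \<le> m*m" using assms cl_mono by auto
  show ?thesis unfolding sepP_def
    apply (rule exI[of _ "1"], rule exI[of _ "[hr (m*i+j), er (m*i+m), hr (m*j+m)]"])
    using assms c b[of i i] b[of i j] b[of i k] b[of j i] b[of j j] b[of k i] b[of k k]
    apply (auto simp: PS_def Fv_simps hr_simps hr_bnd mult_le_0_iff zero_le_mult_iff Pos_def)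
    done
qed

lemma sep_sh2:
  assumes "j < i" "i < k" "k < m"
  shows "sepP m (i,j) (i,k)"
proof -
  have b: "\<And>x y. x < m \<Longrightarrow> y < m \<Longrightarrow> m*x + 1 \<le> Pos m x y \<and> Pos m x y \<le> m*x + m" by (rule Pos_bounds)
  have c: "m*j+m \<le> m*i" "m*j+m \<le> m*k" "m*i+m \<le> m*k" "m*k+m \<le> m*m" using assms cl_mono by auto
  show ?thesis unfolding sepP_def
    apply (rule exI[of _ "1"], rule exI[of _ "[hr (m*i+i), er (m*i+m), hr (m*i+m)]"])
    using assms c b[of i i] b[of i j] b[of i k] b[of j i] b[of j j] b[of k i] b[of k k]
    apply (auto simp: PS_def Fv_simps hr_simps hr_bnd mult_le_0_iff zero_le_mult_iff Pos_def)
    done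
qed

lemma sep_sh3:
  assumes "j < k" "k < i" "i < m"
  shows "sepP m (i,j) (i,k)"
proof -
  have b: "\<And>x y. x < m \<Longrightarrow> y < m \<Longrightarrow> m*x + 1 \<le> Pos m x y \<and> Pos m x y \<le> m*x + m" by (rule Pos_bounds)
  have c: "m*j+m \<le> m*k" "m*j+m \<le> m*i" "m*k+m \<le> m*i" "m*i+m \<le> m*m" using assms cl_mono by auto
  show ?thesis unfolding sepP_def
    apply (rule exI[of _ "1"], rule exI[of _ "[hr (m*j+m), hr (m*i+i-k), er (m*i+m)]"])
    using assms c b[of i i] b[of i j] b[of i k] b[of j i] b[of j j] b[of k i] b[of k k]
    apply (auto simp: PS_def Fv_simps hr_simps hr_bnd mult_le_0_iff zero_le_mult_iff Pos_def)
    done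
qed

lemma sep_sh:
  assumes "i < m" "j < m" "k < m" "i \<noteq> j" "i \<noteq> k" "j \<noteq> k"
  shows "sepP m (i,j) (i,k)"
proof (cases "j < k")
  case True
  then show ?thesis using assms sep_sh1[of i j k m] sep_sh2[of j i k m] sep_sh3[of j k i m]
    by (metis linorder_neqE_nat)
next
  case False
  then have "k < j" using assms by simp
  then have "sepP m (i,k) (i,j)" using assms sep_sh1[of i k j m] sep_sh2[of k i j m] sep_sh3[of k j i m]
    by (metis linorder_neqE_nat)
  then show ?thesis by (rule sepP_sym)
qed

lemma sep_disj_ord:
  assumes "i < j" "k < l" "i < k" "l < m" "j < m" "j \<noteq> k" "j \<noteq> l"
  shows "sepP m (i,j) (k,l)"
  using assms sep_disj1[of i j k l m] sep_disj2[of i k j l m] sep_disj3[of i k l j m]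
  by (metis linorder_neqE_nat)

lemma sep_all:
  assumes "i < j" "j < m" "k < l" "l < m" "(i,j) \<noteq> (k,l)"
  shows "sepP m (i,j) (k,l)"
proof -
  consider "i = k" | "i = l" | "j = k" | "j = l" | "i \<noteq> k" "i \<noteq> l" "j \<noteq> k" "j \<noteq> l" by blast
  then show ?thesis
  proof cases
    case 1 then show ?thesis using assms sep_sh[of i m j l] by auto
  next
    case 2 then show ?thesis using assms sep_sh[of i m j k] sepP_swap2 by auto
  next
    case 3 then show ?thesis using assms sep_sh[of j m i l] sepP_swap1 by auto
  next
    case 4 then have "sepP m (j,i) (j,k)" using assms sep_sh[of j m i k] by auto
    then show ?thesis using 4 sepP_swap1 sepP_swap2 by metis
  next
    case 5
    show ?thesis
    proof (cases "i < k")
      case True then show ?thesis using 5 assms sep_disj_ord[of i j k l m] by auto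
    next
      case False
      then have "k < i" using 5 by simp
      then have "sepP m (k,l) (i,j)" using 5 assms sep_disj_ord[of k l i j m] by auto
      then show ?thesis by (rule sepP_sym)
    qed
  qed
qed

definition Lab :: "nat \<Rightarrow> nat \<times> nat \<Rightarrow> nat" where "Lab m p = fst p * m + snd p"
definition Apx :: "nat \<Rightarrow> nat \<Rightarrow> nat set" where "Apx m a = (\<lambda>r. m*m + r) ` {..<a}"
definition edg :: "nat \<Rightarrow> nat \<Rightarrow> nat \<Rightarrow> nat \<Rightarrow> nat set" where
  "edg m a i j = Lab m ` PS i j \<union> Apx m a"
definition Eset :: "nat \<Rightarrow> nat \<Rightarrow> nat set set" where
  "Eset m a = {edg m a i j | i j. i < j \<and> j < m}"
definition tau :: "nat \<Rightarrow> nat \<Rightarrow> real" where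
  "tau m v = (if v < m*m then real (Pos m (v div m) (v mod m)) else real v + 1)"
definition ar :: "nat \<Rightarrow> nat \<Rightarrow> real list" where
  "ar m a = map (\<lambda>r. real (m*m + r) + 1) [0..<a]"

lemma Lab_lt: "(x::nat) < m \<Longrightarrow> y < m \<Longrightarrow> x*m + y < m*m"
proof -
  assume "x < m" "y < m"
  then have "Suc x * m \<le> m * m" by (intro mult_le_mono1) simp
  then show ?thesis using \<open>y < m\<close> by simp
qed

lemma Lab_props:
  assumes "x < m" "y < m"
  shows "Lab m (x,y) < m*m" "Lab m (x,y) div m = x" "Lab m (x,y) mod m = y"
  using assms Lab_lt[OF assms] by (auto simp: Lab_def)

lemma tau_Lab: "x < m \<Longrightarrow> y < m \<Longrightarrow> tau m (Lab m (x,y)) = real (Pos m x y)"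
  using Lab_props[of x m y] by (simp add: tau_def)

lemma Lab_inj: "inj_on (Lab m) {p. fst p < m \<and> snd p < m}"
proof (rule inj_onI)
  fix p q assume "p \<in> {p. fst p < m \<and> snd p < m}" "q \<in> {p. fst p < m \<and> snd p < m}" "Lab m p = Lab m q"
  then show "p = q"
  proof (cases p, cases q)
    fix x y x' y' assume pq: "p = (x,y)" "q = (x',y')"
    assume h: "p \<in> {p. fst p < m \<and> snd p < m}" "q \<in> {p. fst p < m \<and> snd p < m}" "Lab m p = Lab m q"
    then have "x < m" "y < m" "x' < m" "y' < m" using pq by auto
    then have "x = x'" "y = y'" using Lab_props[of x m y] Lab_props[of x' m y'] h(3) pq by metis+
    then show "p = q" using pq by simp
  qed
qed

lemma Pos_aux:
  fixes Q :: nat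
  assumes "y < m" "y' < m"
    "(if x = y then Q+m else if x < y then Q + y else Q + x - y) =
     (if x = y' then Q+m else if x < y' then Q + y' else Q + x - y')"
  shows "y = y'"
  using assms by (auto split: if_splits)

lemma Pos_inj: "inj_on (\<lambda>p. Pos m (fst p) (snd p)) {p. fst p < m \<and> snd p < m}"
proof (rule inj_onI, clarsimp)
  fix x y x' y' assume h: "x < m" "y < m" "x' < m" "y' < m" "Pos m x y = Pos m x' y'"
  have "x = x'"
  proof (rule ccontr)
    assume "x \<noteq> x'"
    then consider "x < x'" | "x' < x" by linarith
    then show False
    proof cases
      case 1 then show False using cl_mono[OF 1, of m] Pos_bounds[of x m y] Pos_bounds[of x' m y'] h by linarith
    next
      case 2 then show False using cl_mono[OF 2, of m] Pos_bounds[of x m y] Pos_bounds[of x' m y'] h by linarith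
    qed
  qed
  then have "Pos m x y = Pos m x y'" using h by simp
  then have "(if x = y then m*x+m else if x < y then m*x + y else m*x + x - y) =
             (if x = y' then m*x+m else if x < y' then m*x + y' else m*x + x - y')"
    unfolding Pos_def .
  then have "y = y'" using Pos_aux[where Q="m*x" and x=x and y=y and y'=y' and m=m] h by blast
  then show "x = x' \<and> y = y'" using \<open>x = x'\<close> by simp
qed

lemma PS_sub: "i < m \<Longrightarrow> j < m \<Longrightarrow> PS i j \<subseteq> {p. fst p < m \<and> snd p < m}"
  unfolding PS_def by auto

lemma Lab_PS_lt:
  assumes "i < m" "j < m" "v \<in> Lab m ` PS i j" shows "v < m*m"
proof -
  obtain p where p: "p \<in> PS i j" "v = Lab m p" using assms(3) by blast
  then have "fst p < m" "snd p < m" using PS_sub[OF assms(1,2)] by auto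
  then show ?thesis using Lab_props(1)[of "fst p" m "snd p"] p by simp
qed

lemma card_PS: "i \<noteq> j \<Longrightarrow> card (PS i j) = 4"
  unfolding PS_def by (simp add: card_insert_if)

lemma card_Apx: "card (Apx m a) = a"
  unfolding Apx_def by (simp add: card_image)

lemma edg_card:
  assumes "i < j" "j < m"
  shows "card (edg m a i j) = a + 4" "finite (edg m a i j)"
proof -
  have c1: "card (Lab m ` PS i j) = 4"
    using card_PS[of i j] assms inj_on_subset[OF Lab_inj PS_sub[of i m j]] by (simp add: card_image)
  have d: "Lab m ` PS i j \<inter> Apx m a = {}"
    using Lab_PS_lt[of i m j] assms unfolding Apx_def by fastforce
  have f1: "finite (Lab m ` PS i j)" unfolding PS_def by simp
  have f2: "finite (Apx m a)" unfolding Apx_def by simp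
  show "finite (edg m a i j)" unfolding edg_def using f1 f2 by simp
  show "card (edg m a i j) = a + 4" unfolding edg_def
    using card_Un_disjoint[OF f1 f2 d] c1 card_Apx[of m a] by simp
qed

lemma tau_inj_edg:
  assumes "i < j" "j < m"
  shows "inj_on (tau m) (edg m a i j)"
proof -
  have A: "inj_on (tau m) (Lab m ` PS i j)"
  proof (rule inj_onI)
    fix u v assume u: "u \<in> Lab m ` PS i j" and v: "v \<in> Lab m ` PS i j" and e: "tau m u = tau m v"
    obtain p where p: "p \<in> PS i j" "u = Lab m p" using u by blast
    obtain q where q: "q \<in> PS i j" "v = Lab m q" using v by blast
    have pm: "p \<in> {p. fst p < m \<and> snd p < m}" "q \<in> {p. fst p < m \<and> snd p < m}"
      using PS_sub[of i m j] assms p q by auto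
    have "Pos m (fst p) (snd p) = Pos m (fst q) (snd q)"
      using e p q tau_Lab pm by (metis (mono_tags, lifting) mem_Collect_eq of_nat_eq_iff prod.collapse)
    then have "p = q" using inj_onD[OF Pos_inj] pm by blast
    then show "u = v" using p q by simp
  qed
  have B: "inj_on (tau m) (Apx m a)"
    unfolding Apx_def by (rule inj_onI) (auto simp: tau_def)
  have C: "tau m ` (Lab m ` PS i j) \<inter> tau m ` Apx m a = {}"
  proof -
    have "tau m u \<le> real (m*m)" if uu: "u \<in> Lab m ` PS i j" for u
    proof -
      obtain p where p: "p \<in> PS i j" "u = Lab m p" using uu by blast
      then have pm: "fst p < m" "snd p < m" using PS_sub[of i m j] assms by auto
      have "Pos m (fst p) (snd p) \<le> m * fst p + m" using Pos_bounds[OF pm] by simp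
      also have "\<dots> \<le> m * m" using cl_mono[OF pm(1), of m] by simp
      finally show ?thesis using p pm tau_Lab[OF pm] by (metis of_nat_le_iff prod.collapse)
    qed
    moreover have "tau m u > real (m*m)" if "u \<in> Apx m a" for u
      using that unfolding Apx_def tau_def by auto
    ultimately show ?thesis by fastforce
  qed
  show ?thesis unfolding edg_def inj_on_Un using A B C by blast
qed

lemma ar_Suc: "ar m (Suc a) = ar m a @ [real (m*m + a) + 1]"
  unfolding ar_def by simp

lemma Ap_pos: "t \<le> real (m*m) \<Longrightarrow> (-1)^a * prod_list (map (\<lambda>r. t - r) (ar m a)) > (0::real)"
proof (induction a)
  case 0 then show ?case by (simp add: ar_def)
next
  case (Suc a)
  have "(-1)^(Suc a) * prod_list (map (\<lambda>r. t - r) (ar m (Suc a)))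
      = ((-1)^a * prod_list (map (\<lambda>r. t - r) (ar m a))) * (real (m*m + a) + 1 - t)"
    by (simp add: ar_Suc algebra_simps)
  moreover have "real (m*m + a) + 1 - t > 0" using Suc.prems by simp
  ultimately show ?case using Suc by simp
qed

lemma Ap_zero: "r < a \<Longrightarrow> prod_list (map (\<lambda>s. (real (m*m + r) + 1) - s) (ar m a)) = 0"
  unfolding ar_def by (auto simp: prod_list_zero_iff)

lemma len_ar: "length (ar m a) = a" unfolding ar_def by simp

lemma edg_cases:
  assumes "i < j" "j < m" "v \<in> edg m a i j"
  shows "(\<exists>x y. (x,y) \<in> PS i j \<and> v = Lab m (x,y) \<and> tau m v = real (Pos m x y) \<and> tau m v \<le> real (m*m))
         \<or> (v \<in> Apx m a \<and> prod_list (map (\<lambda>r. tau m v - r) (ar m a)) = 0)"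
proof (cases "v \<in> Apx m a")
  case True
  then obtain r where r: "r < a" "v = m*m + r" unfolding Apx_def by auto
  then have "tau m v = real (m*m + r) + 1" unfolding tau_def by simp
  then show ?thesis using True Ap_zero[OF r(1), of m] by simp
next
  case False
  then obtain x y where xy: "(x,y) \<in> PS i j" "v = Lab m (x,y)" using assms unfolding edg_def by auto
  then have xm: "x < m" "y < m" using PS_sub[of i m j] assms by auto
  have "Pos m x y \<le> m*x + m" using Pos_bounds[OF xm] by simp
  also have "\<dots> \<le> m*m" using cl_mono[OF xm(1), of m] by simp
  finally have "real (Pos m x y) \<le> real (m*m)" by (simp only: of_nat_le_iff)
  then have "tau m v \<le> real (m*m)" using tau_Lab[OF xm] xy by simp
  then show ?thesis using xy tau_Lab[OF xm] by blast
qed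

lemma Apx_sub: "Apx m a \<subseteq> edg m a i j" unfolding edg_def by auto

lemma emb:
  fixes \<beta> :: "nat \<Rightarrow> 'a::euclidean_space"
  assumes b: "bij_betw \<beta> {..<DIM('a)} Basis" and dim: "DIM('a) = a + 3"
  shows "lin_embedding (\<lambda>v. gam \<beta> (tau m v)) (a+4) (Eset m a)"
  unfolding lin_embedding_def
proof (intro conjI ballI)
  fix e assume "e \<in> Eset m a"
  then obtain i j where ij: "i < j" "j < m" "e = edg m a i j" unfolding Eset_def by auto
  have ce: "card e = a + 4" "finite e" using edg_card[OF ij(1,2)] ij(3) by auto
  have inj: "inj_on (tau m) e" using tau_inj_edg[OF ij(1,2)] ij(3) by simp
  have cX: "card (tau m ` e) = a + 4" using ce inj by (simp add: card_image)
  have "\<not> affine_dependent (gam \<beta> ` (tau m ` e))"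
    by (rule gam_indep[OF b]) (use ce cX dim in auto)
  moreover have "card (gam \<beta> ` (tau m ` e)) = a + 4"
    using cX gam_inj[OF b] by (simp add: card_image inj_on_subset)
  ultimately show "aff_dim ((\<lambda>v. gam \<beta> (tau m v)) ` e) = int (a+4) - 1"
    using affine_independent_iff_card[of "gam \<beta> ` (tau m ` e)"] by (simp add: image_image)
next
  fix e1 e2 assume "e1 \<in> Eset m a" "e2 \<in> Eset m a"
  then obtain i j k l where ij: "i < j" "j < m" "e1 = edg m a i j" and kl: "k < l" "l < m" "e2 = edg m a k l"
    unfolding Eset_def by auto
  show "convex hull (\<lambda>v. gam \<beta> (tau m v)) ` e1 \<inter> convex hull (\<lambda>v. gam \<beta> (tau m v)) ` e2 =
        convex hull (\<lambda>v. gam \<beta> (tau m v)) ` (e1 \<inter> e2)"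
  proof (cases "(i,j) = (k,l)")
    case True then show ?thesis using ij kl by simp
  next
    case False
    then have "sepP m (i,j) (k,l)" using sep_all ij kl by blast
    then obtain \<epsilon> R where R: "length R \<le> 3"
      and s1: "\<forall>(x,y)\<in>PS i j. Fv R \<epsilon> (real (Pos m x y)) \<le> 0"
      and s2: "\<forall>(x,y)\<in>PS k l. Fv R \<epsilon> (real (Pos m x y)) \<ge> 0"
      and s3: "\<forall>(x,y)\<in>PS i j \<union> PS k l. Fv R \<epsilon> (real (Pos m x y)) = 0 \<longrightarrow> (x,y) \<in> PS i j \<inter> PS k l"
      unfolding sepP_def by auto
    define AP where "AP t = (-1)^a * prod_list (map (\<lambda>r. t - r) (ar m a))" for t
    have key: "(\<epsilon> * (-1)^a) * prod_list (map (\<lambda>r. t - r) (R @ ar m a)) = Fv R \<epsilon> t * AP t" for t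
      unfolding Fv_def AP_def by (simp add: algebra_simps)
    have len: "length (R @ ar m a) \<le> DIM('a)" using R dim len_ar[of m a] by simp
    have fe: "finite e1" "finite e2" using edg_card ij kl by auto
    show ?thesis
    proof (rule pair_sep[where \<epsilon>="\<epsilon> * (-1)^a" and R="R @ ar m a" and \<tau>="tau m", OF b len fe], unfold key)
      fix v assume v: "v \<in> e1"
      have "(\<exists>x y. (x,y) \<in> PS i j \<and> v = Lab m (x,y) \<and> tau m v = real (Pos m x y) \<and> tau m v \<le> real (m*m))
         \<or> (v \<in> Apx m a \<and> prod_list (map (\<lambda>r. tau m v - r) (ar m a)) = 0)"
        using edg_cases[OF ij(1,2), of v a] v ij(3) by simp
      then show "Fv R \<epsilon> (tau m v) * AP (tau m v) \<le> 0"
      proof (elim disjE exE conjE)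
        fix x y assume "(x,y) \<in> PS i j" "tau m v = real (Pos m x y)" "tau m v \<le> real (m*m)"
        then show ?thesis using s1 Ap_pos[of "tau m v" m a] unfolding AP_def
          by (auto simp: mult_le_0_iff)
      qed (simp add: AP_def)
    next
      fix v assume v: "v \<in> e2"
      have "(\<exists>x y. (x,y) \<in> PS k l \<and> v = Lab m (x,y) \<and> tau m v = real (Pos m x y) \<and> tau m v \<le> real (m*m))
         \<or> (v \<in> Apx m a \<and> prod_list (map (\<lambda>r. tau m v - r) (ar m a)) = 0)"
        using edg_cases[OF kl(1,2), of v a] v kl(3) by simp
      then show "Fv R \<epsilon> (tau m v) * AP (tau m v) \<ge> 0"
      proof (elim disjE exE conjE)
        fix x y assume "(x,y) \<in> PS k l" "tau m v = real (Pos m x y)" "tau m v \<le> real (m*m)"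
        then show ?thesis using s2 Ap_pos[of "tau m v" m a] unfolding AP_def
          by auto
      qed (simp add: AP_def)
    next
      fix v assume v: "v \<in> e1" and z: "Fv R \<epsilon> (tau m v) * AP (tau m v) = 0"
      have "(\<exists>x y. (x,y) \<in> PS i j \<and> v = Lab m (x,y) \<and> tau m v = real (Pos m x y) \<and> tau m v \<le> real (m*m))
         \<or> (v \<in> Apx m a \<and> prod_list (map (\<lambda>r. tau m v - r) (ar m a)) = 0)"
        using edg_cases[OF ij(1,2), of v a] v ij(3) by simp
      then show "v \<in> e2"
      proof (elim disjE exE conjE)
        fix x y assume xy: "(x,y) \<in> PS i j" "v = Lab m (x,y)" "tau m v = real (Pos m x y)" "tau m v \<le> real (m*m)"
        have "AP (tau m v) \<noteq> 0" using Ap_pos[of "tau m v" m a] xy unfolding AP_def by auto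
        then have "Fv R \<epsilon> (real (Pos m x y)) = 0" using z xy by simp
        then have "(x,y) \<in> PS k l" using s3 xy by auto
        then show ?thesis using xy kl(3) unfolding edg_def by auto
      next
        assume "v \<in> Apx m a" then show ?thesis using Apx_sub[of m a k l] kl(3) by blast
      qed
    qed
  qed
qed

lemma diag_edge:
  assumes "x < m" "y < m" "x \<noteq> y"
  shows "edg m a (min x y) (max x y) \<in> Eset m a \<and> Lab m (x,x) \<in> edg m a (min x y) (max x y)
         \<and> Lab m (y,y) \<in> edg m a (min x y) (max x y)"
proof -
  have ij: "min x y < max x y" "max x y < m" using assms by auto
  have "(x,x) \<in> PS (min x y) (max x y)" "(y,y) \<in> PS (min x y) (max x y)"
    unfolding PS_def by (auto simp: min_def max_def)
  then show ?thesis using ij unfolding Eset_def edg_def by blast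
qed

lemma lower:
  assumes dim: "DIM('a::euclidean_space) = a + 3" and m2: "2 \<le> m" and mn: "m*m + a \<le> n"
  shows "m + a \<le> chi_s_dk TYPE('a) (a+4) n"
proof -
  have "\<exists>h. bij_betw h {0..<card (Basis::'a set)} (Basis::'a set)"
    using ex_bij_betw_nat_finite[of "Basis::'a set"] by simp
  then obtain \<beta> where b0: "bij_betw \<beta> {0..<card (Basis::'a set)} (Basis::'a set)" by blast
  have b: "bij_betw \<beta> {..<DIM('a)} Basis" using b0 by (simp add: atLeast0LessThan)
  define V where "V = {..<n}"
  define E where "E = Eset m a"
  have eV: "e \<subseteq> V" if eE: "e \<in> E" for e
  proof -
    obtain i j where ij: "i < j" "j < m" "e = edg m a i j" using eE unfolding E_def Eset_def by auto
    have "v < n" if ve: "v \<in> e" for v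
    proof (cases "v \<in> Apx m a")
      case True then show ?thesis using mn unfolding Apx_def by auto
    next
      case False then have "v \<in> Lab m ` PS i j" using ve ij unfolding edg_def by auto
      then have "v < m*m" using Lab_PS_lt[of i m j v] ij by simp
      then show ?thesis using mn by simp
    qed
    then show ?thesis unfolding V_def by auto
  qed
  have U: "uniform_hypergraph (a+4) V E"
    unfolding uniform_hypergraph_def using eV edg_card unfolding V_def E_def Eset_def by auto
  have L: "lin_embedding (\<lambda>v. gam \<beta> (tau m v)) (a+4) E"
    unfolding E_def by (rule emb[OF b dim])
  have cV: "card V = n" unfolding V_def by simp
  have "m + a \<le> strong_chromatic (a+4) V E"
  proof (rule chi_ge[OF U])
    fix c \<kappa> assume sc: "strong_coloring (a+4) V E c \<kappa>"
    have injE: "inj_on \<kappa> e" if eE: "e \<in> E" for e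
    proof -
      have fe: "finite e" using eV[OF eE] unfolding V_def by (simp add: finite_subset)
      have "card (\<kappa> ` e) = card e" "finite e"
        using sc eE U fe unfolding strong_coloring_def uniform_hypergraph_def by auto
      then show ?thesis using eq_card_imp_inj_on by blast
    qed
    define D where "D = (\<lambda>x. Lab m (x,x)) ` {..<m}"
    define C where "C = D \<union> Apx m a"
    have common: "\<exists>e\<in>E. u \<in> e \<and> w \<in> e" if uwC: "u \<in> C" "w \<in> C" for u w
    proof -
      have apx: "Apx m a \<subseteq> e" if eE: "e \<in> E" for e
        using eE Apx_sub unfolding E_def Eset_def by blast
      have dg: "\<exists>e\<in>E. Lab m (x,x) \<in> e" if xm: "x < m" for x
      proof -
        define y :: nat where "y = (if x = 0 then 1 else 0)"
        have "y < m" "x \<noteq> y" using m2 xm unfolding y_def by auto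
        then show ?thesis using diag_edge[OF xm, of y a] unfolding E_def by blast
      qed
      have e01: "edg m a 0 1 \<in> E" using m2 unfolding E_def Eset_def by force
      consider (DD) x y where "x < m" "y < m" "u = Lab m (x,x)" "w = Lab m (y,y)"
        | (DA) x where "x < m" "u = Lab m (x,x)" "w \<in> Apx m a"
        | (AD) y where "y < m" "w = Lab m (y,y)" "u \<in> Apx m a"
        | (AA) "u \<in> Apx m a" "w \<in> Apx m a"
        using uwC unfolding C_def D_def by blast
      then show ?thesis
      proof cases
        case DD then show ?thesis
        proof (cases "x = y")
          case True then show ?thesis using DD dg by blast
        next
          case False then show ?thesis using DD diag_edge[of x m y a] unfolding E_def by blast
        qed
      next
        case DA then show ?thesis using dg apx by blast
      next
        case AD then show ?thesis using dg apx by blast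
      next
        case AA then show ?thesis using e01 apx by blast
      qed
    qed
    have injC: "inj_on \<kappa> C"
    proof (rule inj_onI, rule ccontr)
      fix u w assume uw: "u \<in> C" "w \<in> C" "\<kappa> u = \<kappa> w" "u \<noteq> w"
      then obtain e where e: "e \<in> E" "u \<in> e" "w \<in> e" using common by blast
      have "inj_on \<kappa> e" using injE e(1) by blast
      then have "u = w" using inj_onD e(2,3) uw(3) by metis
      then show False using uw(4) by simp
    qed
    have cD: "card D = m"
    proof -
      have "inj_on (\<lambda>x. Lab m (x,x)) {..<m}"
      proof (rule inj_onI)
        fix x y assume xy: "x \<in> {..<m}" "y \<in> {..<m}" "Lab m (x,x) = Lab m (y,y)"
        have "x = Lab m (x,x) div m" using Lab_props(2)[of x m x] xy(1) by simp
        also have "\<dots> = Lab m (y,y) div m" using xy(3) by simp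
        also have "\<dots> = y" using Lab_props(2)[of y m y] xy(2) by simp
        finally show "x = y" .
      qed
      then show ?thesis unfolding D_def by (simp add: card_image)
    qed
    have disj: "D \<inter> Apx m a = {}"
    proof -
      have "v < m*m" if vD: "v \<in> D" for v
      proof -
        obtain x where "x < m" "v = Lab m (x,x)" using vD unfolding D_def by blast
        then show ?thesis using Lab_props(1)[of x m x] by simp
      qed
      moreover have "m*m \<le> v" if "v \<in> Apx m a" for v using that unfolding Apx_def by auto
      ultimately show ?thesis by (meson disjoint_iff not_le)
    qed
    have cC: "card C = m + a"
    proof -
      have f1: "finite D" unfolding D_def by simp
      have f2: "finite (Apx m a)" unfolding Apx_def by simp
      show ?thesis unfolding C_def using card_Un_disjoint[OF f1 f2 disj] cD card_Apx[of m a] by simp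
    qed
    have CV: "C \<subseteq> V"
    proof
      fix u assume "u \<in> C"
      then obtain e where "e \<in> E" "u \<in> e" using common by blast
      then show "u \<in> V" using eV by blast
    qed
    have "\<kappa> ` C \<subseteq> {1..c}" using sc CV unfolding strong_coloring_def by auto
    then have "card (\<kappa> ` C) \<le> c" using card_mono[of "{1..c}" "\<kappa> ` C"] by simp
    then show "m + a \<le> c" using card_image[OF injC] cC by simp
  qed
  also have "\<dots> \<le> chi_s_dk TYPE('a) (a+4) n" by (rule chiset_ge[OF U cV L])
  finally show ?thesis .
qed

theorem mainTheorem10:
  fixes d k n :: nat
  assumes "DIM('a::euclidean_space) = d" and "d \<ge> 3" and "n \<ge> d + 1"
    and "2 \<le> k" and "k \<le> d + 1"
  shows "chi_s_dk TYPE('a) (d + 1) n \<le> chi_s_dk TYPE('a) k n \<and>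
         \<lfloor>sqrt (real n - real d + 3)\<rfloor> + int d - 3 \<le> int (chi_s_dk TYPE('a) (d + 1) n)"
proof
  show "chi_s_dk TYPE('a) (d + 1) n \<le> chi_s_dk TYPE('a) k n"
    using part1[OF assms(4,5)] by blast
  define X where "X = real n - real d + 3"
  define a where "a = d - 3"
  define f where "f = \<lfloor>sqrt X\<rfloor>"
  define m where "m = nat f"
  have X4: "4 \<le> X" using assms(3) unfolding X_def by simp
  have "sqrt 4 \<le> sqrt X" using X4 by (rule real_sqrt_le_mono)
  then have s2: "2 \<le> sqrt X" by simp
  then have f2: "2 \<le> f" unfolding f_def by (simp add: le_floor_iff)
  then have fm: "f = int m" unfolding m_def by simp
  have m2: "2 \<le> m" using f2 fm by simp
  have "real m \<le> sqrt X" using fm unfolding f_def by (metis of_int_floor_le of_int_of_nat_eq)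
  then have "(real m)^2 \<le> (sqrt X)^2" by (rule power_mono) simp
  then have "real m * real m \<le> X" using X4 by (simp add: power2_eq_square)
  then have "real (m*m + a) \<le> real n" unfolding X_def a_def using assms(2) by simp
  then have mn: "m*m + a \<le> n" by (simp only: of_nat_le_iff)
  have dim: "DIM('a) = a + 3" using assms(1,2) unfolding a_def by simp
  have "m + a \<le> chi_s_dk TYPE('a) (a+4) n" by (rule lower[OF dim m2 mn])
  moreover have "a + 4 = d + 1" using assms(2) unfolding a_def by simp
  ultimately have "int m + int a \<le> int (chi_s_dk TYPE('a) (d + 1) n)" by simp
  moreover have "\<lfloor>sqrt (real n - real d + 3)\<rfloor> + int d - 3 = int m + int a"
    using fm assms(2) unfolding f_def X_def a_def by simp
  ultimately show "\<lfloor>sqrt (real n - real d + 3)\<rfloor> + int d - 3 \<le> int (chi_s_dk TYPE('a) (d + 1) n)" by simp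
qed

end
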